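(* Let $f:\mathbb{N}\to[0,\infty)$ satisfy $\sum_{n\ge1}f(n)<\infty$, let $(\lambda_n)_{n\in\mathbb{N}}$ be a sequence of positive real numbers, and define $F(x):=\sum_{n\ge1}f(n)e(\lambda_n x)$ for $x\in\mathbb{R}$. Let $\beta\in\left(-\frac{\pi}{2},\frac{\pi}{2}\right)\setminus\{0\}$ and $0<r<1$ be fixed. Let $0<\delta<\cos\beta$ be a fixed real number and put $$\alpha:=\frac{2}{\pi}\arctan\left(\frac{\cos\beta-\delta}{|\sin\beta|}\right).$$ Let $\mathcal{M}\subset\mathbb{N}$ be a finite set with cardinality $|\mathcal{M}|=M$. Then for any real numbers $3<Y<X$ we have $$\max_{x\in[Y,X]}\mathrm{Re}\left(e^{i\beta}F(x)\right)\ge \delta r\sum_{m\in\mathcal{M}}f(m)+O\left(F(0)\left(\frac{1+r}{1-r}\right)^M\left(\frac{Y\log X}{X}\right)^{\alpha}\right),$$ where the implied constant depends only on the fixed parameters $\beta,r,\delta$.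
   Context: Here $e(t):=e^{2\pi i t}$ and $\mathbb{N}=\{1,2,3,\dots\}$. *)

theory Defs
  imports "HOL-Analysis.Analysis"
begin

definition e :: "real \<Rightarrow> complex" where
  "e t = exp (2 * of_real pi * \<i> * of_real t)"

text \<open>F(x) = sum over n >= 1 of f(n) e(lambda_n x); index n ranges over N = {1,2,...},
  realised as Suc k for k :: nat.\<close>
definition Fser :: "(nat \<Rightarrow> real) \<Rightarrow> (nat \<Rightarrow> real) \<Rightarrow> real \<Rightarrow> complex" where
  "Fser f lam x = (\<Sum>k. of_real (f (Suc k)) * e (lam (Suc k) * x))"

end

theory Submission
  imports Defs
begin
lemma e_add: "e (s + t) = e s * e t"
  by (simp add: e_def distrib_left distrib_right exp_add)

lemma norm_e [simp]: "norm (e t) = 1"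
  unfolding e_def by (simp add: norm_exp_eq_Re)

lemma e_zero [simp]: "e 0 = 1" by (simp add: e_def)

definition bw :: "real \<Rightarrow> nat \<Rightarrow> real" where
  "bw a n = pochhammer a n / fact n"

lemma bw_pos: "a > 0 \<Longrightarrow> bw a n > 0"
  unfolding bw_def by (simp add: pochhammer_pos)

lemma bw_le1: assumes "0 < a" "a \<le> 1" shows "bw a n \<le> 1"
proof (induction n)
  case 0 then show ?case by (simp add: bw_def)
next
  case (Suc n)
  have "bw a (Suc n) = bw a n * ((a + n) / (Suc n))"
    by (simp add: bw_def pochhammer_Suc fact_Suc field_simps)
  also have "\<dots> \<le> 1 * 1"
    using Suc assms bw_pos[of a n] by (intro mult_mono) (auto simp: field_simps)
  finally show ?case by simp
qed

lemma bw_series_complex: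
  fixes z :: complex assumes "norm z < 1"
  shows "(\<lambda>n. of_real (bw a n) * z ^ n) sums ((1 - z) powr (- of_real a))"
proof -
  have "norm (-z) < 1" using assms by simp
  from gen_binomial_complex[OF this, of "- of_real a"]
  have "(\<lambda>n. ((- of_real a) gchoose n) * (-z) ^ n) sums (1 + - z) powr (- of_real a)" .
  moreover have "((- of_real a :: complex) gchoose n) * (-z) ^ n = of_real (bw a n) * z ^ n" for n
  proof -
    have 1: "((- of_real a :: complex) gchoose n) = (-1)^n * (pochhammer (of_real a) n / fact n)"
      by (simp only: gbinomial_pochhammer minus_minus) simp
    have 2: "(-z)^n = (-1)^n * z^n" by (rule power_minus)
    have 3: "((-1::complex)^n * (-1)^n) = 1" by (simp only: power_mult_distrib[symmetric]) simp
    have 4: "of_real (bw a n) = (pochhammer (of_real a) n / fact n :: complex)"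
      by (simp only: bw_def of_real_divide pochhammer_of_real of_real_fact)
    have "((- of_real a :: complex) gchoose n) * (-z) ^ n = ((-1::complex)^n * (-1)^n) * (pochhammer (of_real a) n / fact n) * z^n"
      by (simp only: 1 2 mult_ac)
    also have "\<dots> = of_real (bw a n) * z ^ n" by (simp only: 3 4 mult_1_left)
    finally show ?thesis .
  qed
  ultimately show ?thesis by simp
qed

lemma e_mult_nat: "e (t * real n) = e t ^ n"
  unfolding e_def by (simp add: exp_of_nat_mult[symmetric] mult_ac)

lemma sector_trig:
  fixes \<beta> \<delta> \<theta> \<psi> :: real
  assumes "0 < \<theta>" "\<theta> < pi/2" "\<bar>\<psi>\<bar> \<le> \<theta>" "tan \<theta> = (cos \<beta> - \<delta>) / \<bar>sin \<beta>\<bar>" "sin \<beta> \<noteq> 0"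
  shows "cos \<beta> * cos \<psi> - sin \<beta> * sin \<psi> \<ge> \<delta> * cos \<psi>"
proof -
  have cpos: "cos \<psi> > 0" using assms by (intro cos_gt_zero_pi) auto
  have "tan \<bar>\<psi>\<bar> \<le> tan \<theta>" using assms by (intro tan_mono_le) auto
  have pl: "\<bar>\<psi>\<bar> \<le> pi" using assms by linarith
  have s0: "sin \<bar>\<psi>\<bar> \<ge> 0" using pl by (intro sin_ge_zero) auto
  have "sin \<bar>\<psi>\<bar> = \<bar>sin \<psi>\<bar>"
  proof (cases "\<psi> \<ge> 0")
    case True thus ?thesis using s0 by simp
  next
    case False thus ?thesis using s0 by (simp add: abs_if)
  qed
  moreover have "cos \<bar>\<psi>\<bar> = cos \<psi>" by (simp add: abs_if)
  ultimately have "tan \<bar>\<psi>\<bar> = \<bar>sin \<psi>\<bar> / cos \<psi>" by (simp add: tan_def)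
  moreover note \<open>tan \<bar>\<psi>\<bar> \<le> tan \<theta>\<close>
  ultimately have "\<bar>sin \<psi>\<bar> \<le> tan \<theta> * cos \<psi>" using cpos by (simp add: divide_le_eq)
  hence "\<bar>sin \<beta>\<bar> * \<bar>sin \<psi>\<bar> \<le> \<bar>sin \<beta>\<bar> * (tan \<theta> * cos \<psi>)"
    by (intro mult_left_mono) auto
  also have "\<dots> = (\<bar>sin \<beta>\<bar> * tan \<theta>) * cos \<psi>" by (simp only: mult_ac)
  also have "\<bar>sin \<beta>\<bar> * tan \<theta> = cos \<beta> - \<delta>" using assms by (simp add: field_simps)
  finally have "sin \<beta> * sin \<psi> \<le> (cos \<beta> - \<delta>) * cos \<psi>"
    by (metis abs_ge_self abs_mult order_trans)
  thus ?thesis by (simp add: algebra_simps)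
qed

lemma sector_powr:
  fixes w :: complex and a \<beta> \<delta> :: real
  assumes "Re w > 0" "0 < a" "a < 1" "tan (a * pi / 2) = (cos \<beta> - \<delta>) / \<bar>sin \<beta>\<bar>" "sin \<beta> \<noteq> 0"
  shows "Re (exp (\<i> * of_real \<beta>) * w powr (- of_real a)) \<ge> \<delta> * Re (w powr (- of_real a))"
    and "Re (w powr (- of_real a)) \<ge> 0"
proof -
  have w0: "w \<noteq> 0" using assms by auto
  define R where "R = exp (- a * Re (Ln w))"
  define \<psi> where "\<psi> = - a * Im (Ln w)"
  have R: "R > 0" by (simp add: R_def)
  have "\<bar>Im (Ln w)\<bar> < pi / 2" using Re_Ln_pos_lt_imp assms by blast
  hence psi: "\<bar>\<psi>\<bar> \<le> a * pi / 2" using assms by (simp add: \<psi>_def abs_mult)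
  have eq: "w powr (- of_real a) = R * cis \<psi>"
    using w0 by (simp add: powr_def R_def \<psi>_def exp_eq_polar)
  have "a * pi \<le> 1 * pi" using assms by (intro mult_right_mono) auto
  hence "\<bar>\<psi>\<bar> \<le> pi / 2" using psi by linarith
  hence cpos: "cos \<psi> \<ge> 0"
    by (intro cos_ge_zero) linarith+
  have th: "0 < a * pi / 2" "a * pi / 2 < pi / 2" using assms by auto
  have "Re (exp (\<i> * of_real \<beta>) * w powr (- of_real a)) = R * (cos \<beta> * cos \<psi> - sin \<beta> * sin \<psi>)"
    by (simp add: eq exp_eq_polar cis.sel algebra_simps)
  also have "\<dots> \<ge> R * (\<delta> * cos \<psi>)"
    using sector_trig[OF th psi assms(4,5)] R by (intro mult_left_mono) auto
  finally have "Re (exp (\<i> * of_real \<beta>) * w powr (- of_real a)) \<ge> R * (\<delta> * cos \<psi>)" .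
  moreover have "Re (w powr (- of_real a)) = R * cos \<psi>" by (simp add: eq)
  ultimately show "Re (exp (\<i> * of_real \<beta>) * w powr (- of_real a)) \<ge> \<delta> * Re (w powr (- of_real a))"
    by (simp only: mult.left_commute)
  show "Re (w powr (- of_real a)) \<ge> 0" using R cpos by (simp add: eq)
qed

lemma bw_series_real:
  fixes x :: real assumes "0 \<le> x" "x < 1"
  shows "(\<lambda>n. bw a n * x ^ n) sums ((1 - x) powr (- a))"
proof -
  have "norm (of_real x :: complex) < 1" using assms by simp
  from bw_series_complex[OF this, of a]
  have "(\<lambda>n. of_real (bw a n * x ^ n) :: complex) sums (of_real (1 - x)) powr (- of_real a)" by simp
  also have "(of_real (1 - x) :: complex) powr (- of_real a) = of_real (1 - x) powr (of_real (- a))"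
    by (simp only: of_real_minus)
  also have "\<dots> = of_real ((1 - x) powr (- a))"
    using assms by (intro powr_of_real) auto
  finally show ?thesis by (simp only: sums_of_real_iff)
qed

definition pw :: "real \<Rightarrow> real \<Rightarrow> nat \<Rightarrow> real" where
  "pw a c n = c powr a * bw a n * (1 - c) ^ n"

lemma pw_nonneg: "0 < a \<Longrightarrow> c < 1 \<Longrightarrow> pw a c n \<ge> 0"
  unfolding pw_def using bw_pos[of a n] by simp

lemma Ghat_sums:
  assumes "0 < c" "c < 1"
  shows "(\<lambda>n. of_real (pw a c n) * e (\<nu> * real n)) sums
           (of_real (c powr a) * (1 - of_real (1 - c) * e \<nu>) powr (- of_real a))"
proof -
  have "norm (of_real (1 - c) * e \<nu>) = \<bar>1 - c\<bar>" by (simp only: norm_mult norm_of_real norm_e mult_1_right)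
  hence "norm (of_real (1 - c) * e \<nu>) < 1" using assms by simp
  from sums_mult[OF bw_series_complex[OF this, of a], of "of_real (c powr a)"]
  show ?thesis by (simp add: pw_def e_mult_nat power_mult_distrib mult_ac)
qed

lemma pw_sums_1:
  assumes "0 < c" "c < 1"
  shows "pw a c sums 1"
proof -
  have "(\<lambda>n. bw a n * (1 - c) ^ n) sums (c powr (- a))"
    using bw_series_real[of "1 - c" a] assms by simp
  from sums_mult[OF this, of "c powr a"] assms have "(\<lambda>n. c powr a * (bw a n * (1 - c) ^ n)) sums 1"
    by (simp add: powr_minus)
  moreover have "pw a c = (\<lambda>n. c powr a * (bw a n * (1 - c) ^ n))" by (auto simp: pw_def fun_eq_iff mult_ac)
  ultimately show ?thesis by simp
qed

lemma Ghat_sector: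
  assumes "0 < c" "c < 1" "0 < a" "a < 1" "tan (a * pi / 2) = (cos \<beta> - \<delta>) / \<bar>sin \<beta>\<bar>" "sin \<beta> \<noteq> 0"
  fixes \<nu> :: real defines "G \<equiv> of_real (c powr a) * (1 - of_real (1 - c) * e \<nu>) powr (- of_real a)"
  shows "Re (exp (\<i> * of_real \<beta>) * G) \<ge> \<delta> * Re G" and "Re G \<ge> 0"
proof -
  define w where "w = 1 - of_real (1 - c) * e \<nu>"
  have "Re (of_real (1 - c) * e \<nu>) \<le> norm (of_real (1 - c) * e \<nu>)" by (rule complex_Re_le_cmod)
  also have "\<dots> = \<bar>1 - c\<bar>" by (simp only: norm_mult norm_of_real norm_e mult_1_right)
  also have "\<dots> = 1 - c" using assms by simp
  finally have r1: "Re (of_real (1 - c) * e \<nu>) \<le> 1 - c" .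
  have "Re w = 1 - Re (of_real (1 - c) * e \<nu>)" by (simp only: w_def minus_complex.sel one_complex.sel)
  hence "Re w > 0" using r1 assms by linarith
  note s = sector_powr[OF this assms(3-6)]
  have cp: "c powr a > 0" using assms by simp
  have "Re (exp (\<i> * of_real \<beta>) * G) = c powr a * Re (exp (\<i> * of_real \<beta>) * w powr (- of_real a))"
    by (simp add: G_def w_def mult.left_commute)
  also have "\<dots> \<ge> c powr a * (\<delta> * Re (w powr (- of_real a)))"
    using s(1) cp by (intro mult_left_mono) auto
  finally show "Re (exp (\<i> * of_real \<beta>) * G) \<ge> \<delta> * Re G" by (simp add: G_def w_def mult_ac)
  show "Re G \<ge> 0" using s(2) cp by (simp add: G_def w_def)
qed

definition Sset :: "real \<Rightarrow> real \<Rightarrow> nat set" where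
  "Sset Y X = {k. Y \<le> real k \<and> real k \<le> X}"

lemma finite_Sset: "finite (Sset Y X)"
proof -
  have "Sset Y X \<subseteq> {..nat \<lceil>X\<rceil>}"
  proof
    fix x assume "x \<in> Sset Y X"
    hence "real x \<le> X" by (simp add: Sset_def)
    hence "real x \<le> real_of_int \<lceil>X\<rceil>" using le_of_int_ceiling order_trans by blast
    hence "int x \<le> \<lceil>X\<rceil>" by (metis of_int_le_iff of_int_of_nat_eq)
    hence "x \<le> nat \<lceil>X\<rceil>" by (metis nat_int nat_mono)
    thus "x \<in> {..nat \<lceil>X\<rceil>}" by simp
  qed
  thus ?thesis by (rule finite_subset) auto
qed

definition What :: "real \<Rightarrow> real \<Rightarrow> real \<Rightarrow> real \<Rightarrow> real \<Rightarrow> complex" where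
  "What a c Y X \<nu> = (\<Sum>k\<in>Sset Y X. of_real (pw a c k) * e (\<nu> * real k))"

definition eta :: "real \<Rightarrow> real \<Rightarrow> real \<Rightarrow> real \<Rightarrow> real" where
  "eta a c Y X = 1 - (\<Sum>k\<in>Sset Y X. pw a c k)"

lemma eta_nonneg:
  assumes "0 < a" "0 < c" "c < 1" shows "eta a c Y X \<ge> 0"
proof -
  have "(\<Sum>k\<in>Sset Y X. pw a c k) \<le> suminf (pw a c)"
    using pw_sums_1[OF assms(2,3), of a] pw_nonneg[OF assms(1,3)]
    by (intro sum_le_suminf) (auto simp: sums_iff finite_Sset)
  thus ?thesis using pw_sums_1[OF assms(2,3), of a] by (simp add: eta_def sums_iff)
qed

lemma trunc_err:
  assumes "0 < a" "0 < c" "c < 1"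
  shows "norm (of_real (c powr a) * (1 - of_real (1 - c) * e \<nu>) powr (- of_real a) - What a c Y X \<nu>)
           \<le> eta a c Y X"
proof -
  define S where "S = Sset Y X"
  have fS: "finite S" by (simp add: S_def finite_Sset)
  define t where "t n = of_real (pw a c n) * e (\<nu> * real n)" for n
  define G where "G = of_real (c powr a) * (1 - of_real (1 - c) * e \<nu>) powr (- of_real a)"
  have tG: "t sums G" unfolding t_def G_def by (rule Ghat_sums[OF assms(2,3)])
  have tW: "(\<lambda>n. if n \<in> S then t n else 0) sums What a c Y X \<nu>"
    unfolding What_def S_def[symmetric] t_def by (rule sums_If_finite_set[OF fS])
  have g: "(\<lambda>n. if n \<in> S then 0 else t n) sums (G - What a c Y X \<nu>)"
    using sums_diff[OF tG tW] by (simp add: if_distrib cong: if_cong)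
  have pS: "(\<lambda>n. if n \<in> S then pw a c n else 0) sums (\<Sum>k\<in>S. pw a c k)"
    by (rule sums_If_finite_set[OF fS])
  have h: "(\<lambda>n. if n \<in> S then 0 else pw a c n) sums eta a c Y X"
    using sums_diff[OF pw_sums_1[OF assms(2,3), of a] pS] by (simp add: eta_def S_def if_distrib cong: if_cong)
  have nrm: "norm (if n \<in> S then 0 else t n) = (if n \<in> S then 0 else pw a c n)" for n
    using pw_nonneg[OF assms(1,3), of n] by (simp add: t_def norm_mult)
  have "norm (G - What a c Y X \<nu>) = norm (\<Sum>n. if n \<in> S then 0 else t n)"
    using g by (simp add: sums_iff)
  also have "\<dots> \<le> (\<Sum>n. norm (if n \<in> S then 0 else t n))"
    using h by (intro summable_norm) (simp only: nrm sums_iff)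
  also have "\<dots> = eta a c Y X" using h by (simp only: nrm sums_iff)
  finally show ?thesis by (simp add: G_def)
qed

lemma exp2_le9: "exp (2::real) \<le> 9"
proof -
  have "exp (2::real) = exp 1 * exp 1" by (simp flip: exp_add)
  also have "\<dots> \<le> 3 * 3" using exp_le by (intro mult_mono) auto
  finally show ?thesis by simp
qed

lemma eta_bound:
  assumes a: "0 < a" "a < 1" and Y: "3 < Y" "Y < X"
  defines "c \<equiv> ln X / X"
  shows "eta a c Y X \<le> 10 * (Y * ln X / X) powr a"
proof -
  have X3: "X > 3" using Y by simp
  have lnX1: "ln X \<ge> 1" using X3 exp_le by (subst ln_ge_iff) auto
  have c0: "0 < c" using lnX1 X3 by (simp add: c_def)
  have c1: "c < 1" using X3 by (simp add: c_def)
  define \<rho> where "\<rho> = 1 - c"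
  define \<rho>' where "\<rho>' = 1 - 1 / Y"
  define N where "N = nat \<lfloor>X\<rfloor> + 1"
  define S where "S = Sset Y X"
  define \<epsilon> where "\<epsilon> = (Y * ln X / X) powr a"
  have \<rho>: "0 < \<rho>" "\<rho> < 1" using c0 c1 by (auto simp: \<rho>_def)
  have \<rho>': "0 < \<rho>'" "\<rho>' < 1" using Y by (auto simp: \<rho>'_def)
  have \<rho>'Y: "\<rho>' powr Y \<ge> exp (-2)"
  proof -
    have "- (1/Y) - 2 * (1/Y)^2 \<le> ln (1 - 1/Y)"
      using Y by (intro ln_one_minus_pos_lower_bound) auto
    moreover have "2 * (1/Y)^2 \<le> 1 / Y" using Y by (simp add: power2_eq_square field_simps)
    ultimately have "ln \<rho>' \<ge> - 2 / Y" unfolding \<rho>'_def by simp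
    hence "Y * ln \<rho>' \<ge> -2" using Y by (simp add: field_simps)
    thus ?thesis using \<rho>' by (simp add: powr_def)
  qed
  define A where "A n = c powr a * (bw a n * \<rho>' ^ n) / (\<rho>' powr Y)" for n
  define B where "B n = c powr a * (if N \<le> n then \<rho> ^ n else 0)" for n
  have As: "A sums (c powr a * (1 - \<rho>') powr (- a) / (\<rho>' powr Y))"
    unfolding A_def using bw_series_real[of \<rho>' a] \<rho>'
    by (intro sums_divide sums_mult) auto
  have geo: "(\<lambda>n. \<rho> ^ (n + N)) sums (\<rho> ^ N / (1 - \<rho>))"
    using sums_mult2[OF geometric_sums[of \<rho>], of "\<rho> ^ N"] \<rho> by (simp add: power_add divide_inverse mult_ac)
  have "(\<lambda>n. if N \<le> n then \<rho> ^ n else 0) sums (\<rho> ^ N / (1 - \<rho>))"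
    using geo by (subst sums_zero_iff_shift[symmetric, of N]) auto
  hence Bs: "B sums (c powr a * (\<rho> ^ N / (1 - \<rho>)))" unfolding B_def by (rule sums_mult)
  have h: "(\<lambda>n. if n \<in> S then 0 else pw a c n) sums eta a c Y X"
  proof -
    have pS: "(\<lambda>n. if n \<in> S then pw a c n else 0) sums (\<Sum>k\<in>S. pw a c k)"
      by (rule sums_If_finite_set) (simp add: S_def finite_Sset)
    show ?thesis
      using sums_diff[OF pw_sums_1[OF c0 c1, of a] pS] by (simp add: eta_def S_def if_distrib cong: if_cong)
  qed
  have cp: "c powr a > 0" using c0 by simp
  have Anonneg: "A n \<ge> 0" for n unfolding A_def using bw_pos[OF a(1), of n] \<rho>' cp by simp
  have Bnonneg: "B n \<ge> 0" for n unfolding B_def using \<rho> cp by simp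
  have pt: "(if n \<in> S then 0 else pw a c n) \<le> A n + B n" for n
  proof (cases "n \<in> S")
    case True thus ?thesis using Anonneg[of n] Bnonneg[of n] by simp
  next
    case False
    hence "real n < Y \<or> real n > X" by (auto simp: S_def Sset_def)
    thus ?thesis
    proof
      assume nY: "real n < Y"
      have "pw a c n \<le> c powr a * bw a n * 1"
        unfolding pw_def using \<rho> cp bw_pos[OF a(1), of n]
        by (intro mult_left_mono) (auto simp: \<rho>_def power_le_one)
      also have "\<dots> \<le> A n"
      proof -
        have "\<rho>' powr Y \<le> \<rho>' powr (real n)" using nY \<rho>' by (intro powr_mono') auto
        also have "\<dots> = \<rho>' ^ n" using \<rho>' by (simp add: powr_realpow)
        finally have "1 \<le> \<rho>' ^ n / \<rho>' powr Y" using \<rho>' by simp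
        hence "c powr a * bw a n * 1 \<le> c powr a * bw a n * (\<rho>' ^ n / \<rho>' powr Y)"
          using cp bw_pos[OF a(1), of n] by (intro mult_left_mono) auto
        thus ?thesis by (simp add: A_def)
      qed
      finally show ?thesis using False Bnonneg[of n] by simp
    next
      assume nX: "real n > X"
      have "\<lfloor>X\<rfloor> < int n" using nX by (simp add: floor_less_iff)
      moreover have "\<lfloor>X\<rfloor> \<ge> 0" using X3 by simp
      ultimately have "nat \<lfloor>X\<rfloor> < n" using nat_less_iff by blast
      hence "N \<le> n" by (simp add: N_def)
      have "pw a c n \<le> c powr a * 1 * \<rho> ^ n"
        unfolding pw_def \<rho>_def using cp \<rho> bw_le1[of a n] a
        by (intro mult_right_mono mult_left_mono) (auto simp: \<rho>_def)
      also have "\<dots> = B n" using \<open>N \<le> n\<close> by (simp add: B_def)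
      finally show ?thesis using False Anonneg[of n] by simp
    qed
  qed
  have "eta a c Y X \<le> c powr a * (1 - \<rho>') powr (- a) / (\<rho>' powr Y) + c powr a * (\<rho> ^ N / (1 - \<rho>))"
    by (rule sums_le[OF pt h sums_add[OF As Bs]])
  also have "c powr a * (1 - \<rho>') powr (- a) / (\<rho>' powr Y) \<le> 9 * \<epsilon>"
  proof -
    have "(1 - \<rho>') powr (- a) = Y powr a" using Y by (simp add: \<rho>'_def powr_minus_divide powr_divide)
    hence "c powr a * (1 - \<rho>') powr (- a) = \<epsilon>"
      using c0 Y by (simp add: \<epsilon>_def c_def powr_mult[symmetric] mult_ac)
    moreover have "1 / (\<rho>' powr Y) \<le> 9"
    proof -
      have "1 / (\<rho>' powr Y) \<le> 1 / exp (-2)" using \<rho>'Y \<rho>' by (intro divide_left_mono) auto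
      also have "\<dots> = exp 2" by (simp add: exp_minus divide_inverse)
      finally show ?thesis using exp2_le9 by simp
    qed
    moreover have "\<epsilon> \<ge> 0" by (simp add: \<epsilon>_def)
    ultimately show ?thesis
      by (metis mult_left_mono times_divide_eq_right mult.commute mult_1_left)
  qed
  also have "c powr a * (\<rho> ^ N / (1 - \<rho>)) \<le> \<epsilon>"
  proof -
    have "\<rho> ^ N = \<rho> powr real N" using \<rho> by (simp add: powr_realpow)
    also have "\<dots> \<le> \<rho> powr X"
    proof -
      have "real (nat \<lfloor>X\<rfloor>) = real_of_int \<lfloor>X\<rfloor>" using X3 by simp
      hence "real N = real_of_int \<lfloor>X\<rfloor> + 1" by (simp add: N_def)
      moreover have "X \<le> real_of_int \<lfloor>X\<rfloor> + 1" by (rule real_of_int_floor_add_one_ge)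
      ultimately have "X \<le> real N" by linarith
      thus ?thesis using \<rho> by (intro powr_mono') auto
    qed
    also have "\<dots> = exp (X * ln \<rho>)" using \<rho> by (simp add: powr_def)
    also have "\<dots> \<le> exp (X * (-c))"
    proof -
      have "ln \<rho> \<le> - c" using ln_le_minus_one[OF \<rho>(1)] by (simp add: \<rho>_def)
      hence "X * ln \<rho> \<le> X * (-c)" using X3 by (intro mult_left_mono) auto
      thus ?thesis by simp
    qed
    also have "X * (-c) = - ln X" using X3 by (simp add: c_def)
    also have "exp (- ln X) = 1 / X" using X3 by (simp add: exp_minus divide_inverse)
    finally have rN: "\<rho> ^ N \<le> 1 / X" .
    have "c powr a * (\<rho> ^ N / (1 - \<rho>)) = c powr (a - 1) * \<rho> ^ N"
      using c0 by (simp add: \<rho>_def powr_diff)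
    also have "\<dots> \<le> c powr (a - 1) * (1 / X)" using rN by (intro mult_left_mono) auto
    also have "\<dots> \<le> c powr (a - 1) * (c * Y powr a)"
    proof (intro mult_left_mono)
      have "1 \<le> Y powr a" using Y a by (intro ge_one_powr_ge_zero) auto
      hence "1 * 1 \<le> ln X * Y powr a" using lnX1 by (intro mult_mono) auto
      hence "1 \<le> ln X * Y powr a" by simp
      thus "1 / X \<le> c * Y powr a" using X3 by (simp add: c_def field_simps)
    qed auto
    also have "\<dots> = (c powr (a - 1) * c) * Y powr a" by (simp only: mult_ac)
    also have "c powr (a - 1) * c = c powr a" using c0 by (simp add: powr_diff)
    also have "c powr a * Y powr a = (c * Y) powr a" using c0 Y by (simp add: powr_mult)
    also have "c * Y = Y * ln X / X" by (simp add: c_def)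
    also have "(Y * ln X / X) powr a = \<epsilon>" by (simp add: \<epsilon>_def)
    finally show ?thesis .
  qed
  finally show ?thesis by (simp add: \<epsilon>_def)
qed

lemma cnj_e: "cnj (e t) = e (- t)"
  unfolding e_def by (simp add: exp_cnj)

lemma e_sum: "finite A \<Longrightarrow> (\<Prod>i\<in>A. e (f i)) = e (\<Sum>i\<in>A. f i)"
  by (induction A rule: finite_induct) (simp_all add: e_add)

definition Qr :: "real \<Rightarrow> real \<Rightarrow> real" where
  "Qr r t = (1 - r^2) / (norm (1 - of_real r * e t))^2"

lemma Qr_pos: assumes "0 \<le> r" "r < 1" shows "Qr r t > 0"
proof -
  have "norm (of_real r * e t) = r" using assms by (simp add: norm_mult)
  hence "1 - of_real r * e t \<noteq> 0" using assms by (metis norm_one less_irrefl right_minus_eq)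
  moreover have "1 - r^2 > 0"
  proof -
    have "r * r \<le> r * 1" using assms by (intro mult_left_mono) auto
    thus ?thesis using assms by (simp add: power2_eq_square)
  qed
  ultimately show ?thesis by (simp add: Qr_def)
qed

lemma Qr_zero: assumes "0 \<le> r" "r < 1" shows "Qr r 0 = (1 + r) / (1 - r)"
proof -
  have "norm (of_real (1 - r) :: complex) = \<bar>1 - r\<bar>" by (rule norm_of_real)
  hence "norm (of_real (1 - r) :: complex) = 1 - r" using assms by simp
  hence "norm (1 - of_real r :: complex) = 1 - r" by (metis of_real_1 of_real_diff)
  moreover have "1 - r^2 = (1 + r) * (1 - r)" by (simp add: power2_eq_square algebra_simps)
  ultimately show ?thesis using assms by (simp add: Qr_def power2_eq_square)
qed

lemma poisson_has_sum:
  assumes r: "0 \<le> r" "r < 1"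
  shows "((\<lambda>k::int. of_real (r ^ nat \<bar>k\<bar>) * e (of_int k * t)) has_sum of_real (Qr r t)) UNIV"
proof -
  define f where "f k = of_real (r ^ nat \<bar>k\<bar>) * e (of_int k * t)" for k :: int
  define z where "z = of_real r * e t"
  define w where "w = of_real r * e (- t)"
  have nz: "norm z = r" using r by (simp add: z_def norm_mult)
  have nw: "norm w = r" using r by (simp add: w_def norm_mult)
  have wz: "w = cnj z" by (simp add: w_def z_def cnj_e)
  have z1: "1 - z \<noteq> 0" using nz r by (metis norm_one less_irrefl right_minus_eq)
  have w1: "1 - w \<noteq> 0" using nw r by (metis norm_one less_irrefl right_minus_eq)
  have sr: "summable (\<lambda>n. r ^ n)" using r by (intro summable_geometric) auto
  have pos: "(f has_sum (1 / (1 - z))) {0..}"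
  proof -
    have "(\<lambda>n. z ^ n) sums (1 / (1 - z))" using nz r geometric_sums[of z] by simp
    moreover have "summable (\<lambda>n. norm (z ^ n))" using sr by (simp add: norm_power nz)
    ultimately have "((\<lambda>n. z ^ n) has_sum (1 / (1 - z))) UNIV" by (intro norm_summable_imp_has_sum)
    moreover have "f (int n) = z ^ n" for n
      by (simp add: f_def z_def power_mult_distrib e_mult_nat[symmetric] mult.commute)
    ultimately have "((\<lambda>n. f (int n)) has_sum (1 / (1 - z))) UNIV" by simp
    moreover have "bij_betw int UNIV {0::int..}"
      by (rule bij_betw_byWitness[of _ nat]) (auto simp: image_def intro: exI[of _ "nat _"])
    ultimately show ?thesis by (simp add: has_sum_reindex_bij_betw)
  qed
  have neg: "(f has_sum (w / (1 - w))) {..<0}"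
  proof -
    have "(\<lambda>n. w * w ^ n) sums (w * (1 / (1 - w)))" using nw r geometric_sums[of w] by (intro sums_mult) simp
    moreover have "summable (\<lambda>n. norm (w * w ^ n))" using sr nw by (simp add: norm_mult norm_power summable_mult)
    ultimately have "((\<lambda>n. w * w ^ n) has_sum (w / (1 - w))) UNIV" by (intro norm_summable_imp_has_sum) auto
    moreover have "f (- int (Suc n)) = w * w ^ n" for n
    proof -
      have a1: "nat \<bar>- int (Suc n)\<bar> = Suc n" by simp
      have a2: "of_int (- int (Suc n)) * t = - t * real (Suc n)" by (simp add: algebra_simps)
      have "f (- int (Suc n)) = of_real (r ^ Suc n) * e (- t * real (Suc n))"
        by (simp only: f_def a1 a2)
      also have "\<dots> = w ^ Suc n" by (simp only: e_mult_nat w_def power_mult_distrib of_real_power)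
      finally show ?thesis by simp
    qed
    ultimately have "((\<lambda>n. f (- int (Suc n))) has_sum (w / (1 - w))) UNIV" by simp
    moreover have "bij_betw (\<lambda>n. - int (Suc n)) UNIV {..<0::int}"
    proof (rule bij_betw_byWitness[of _ "\<lambda>k. nat (- k) - 1"])
      show "(\<lambda>n. - int (Suc n)) ` UNIV \<subseteq> {..<0}" by auto
      show "(\<lambda>k. nat (- k) - 1) ` {..<0} \<subseteq> UNIV" by auto
    qed auto
    ultimately show ?thesis
      using has_sum_reindex_bij_betw[of "\<lambda>n. - int (Suc n)" UNIV "{..<0::int}" f "w / (1 - w)"] by blast
  qed
  have "(f has_sum (1 / (1 - z) + w / (1 - w))) ({0..} \<union> {..<0})"
    by (rule has_sum_Un_disjoint[OF pos neg]) auto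
  moreover have "{0::int..} \<union> {..<0} = UNIV" by auto
  moreover have "1 / (1 - z) + w / (1 - w) = of_real (Qr r t)"
  proof -
    have "1 / (1 - z) + w / (1 - w) = (1 - w * z) / ((1 - z) * (1 - w))"
      using z1 w1 by (simp add: field_simps)
    also have "w * z = of_real (r^2)" using complex_norm_square[of z] nz by (simp add: wz mult.commute)
    also have "(1 - z) * (1 - w) = of_real ((norm (1 - z))^2)"
      using complex_norm_square[of "1 - z"] by (simp add: wz)
    finally show ?thesis by (simp add: Qr_def z_def)
  qed
  ultimately have "(f has_sum of_real (Qr r t)) UNIV" by simp
  thus ?thesis unfolding f_def .
qed

lemma rabs_has_sum:
  fixes r :: real
  assumes r: "0 \<le> r" "r < 1"
  shows "((\<lambda>k::int. r ^ nat \<bar>k\<bar>) has_sum ((1 + r) / (1 - r))) UNIV"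
proof -
  have "((\<lambda>k::int. of_real (r ^ nat \<bar>k\<bar>) :: complex) has_sum of_real (Qr r 0)) UNIV"
    using poisson_has_sum[OF r, of 0] by simp
  hence "((\<lambda>k::int. r ^ nat \<bar>k\<bar>) has_sum (Qr r 0)) UNIV" by (simp only: has_sum_of_real_iff)
  thus ?thesis using Qr_zero[OF r] by simp
qed

definition JJ :: "nat set \<Rightarrow> (nat \<Rightarrow> int) set" where
  "JJ Ms = PiE Ms (\<lambda>_. UNIV)"

definition cw :: "real \<Rightarrow> nat set \<Rightarrow> (nat \<Rightarrow> int) \<Rightarrow> real" where
  "cw r Ms j = (\<Prod>i\<in>Ms. r ^ nat \<bar>j i\<bar>)"

definition mu :: "(nat \<Rightarrow> real) \<Rightarrow> nat set \<Rightarrow> (nat \<Rightarrow> int) \<Rightarrow> real" where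
  "mu lam Ms j = (\<Sum>i\<in>Ms. of_int (j i) * lam i)"

definition Pr :: "real \<Rightarrow> (nat \<Rightarrow> real) \<Rightarrow> nat set \<Rightarrow> real \<Rightarrow> real" where
  "Pr r lam Ms x = (\<Prod>i\<in>Ms. Qr r (lam i * x))"

lemma Pr_pos: "0 \<le> r \<Longrightarrow> r < 1 \<Longrightarrow> Pr r lam Ms x > 0"
  unfolding Pr_def using Qr_pos by (intro prod_pos) auto

lemma cw_nonneg: "0 \<le> r \<Longrightarrow> cw r Ms j \<ge> 0"
  unfolding cw_def by (intro prod_nonneg) auto

lemma P_has_sum:
  assumes r: "0 \<le> r" "r < 1" and Ms: "finite Ms"
  shows "((\<lambda>j. of_real (cw r Ms j) * e (mu lam Ms j * x)) has_sum of_real (Pr r lam Ms x)) (JJ Ms)"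
proof -
  define f where "f i k = of_real (r ^ nat \<bar>k\<bar>) * e (of_int k * (lam i * x))" for i and k :: int
  have fs: "(f i has_sum of_real (Qr r (lam i * x))) UNIV" for i
    unfolding f_def by (rule poisson_has_sum[OF r])
  have abs: "(\<lambda>k. norm (f i k)) summable_on UNIV" for i
  proof -
    have "(\<lambda>k::int. r ^ nat \<bar>k\<bar>) summable_on UNIV" using rabs_has_sum[OF r] by (rule has_sum_imp_summable)
    moreover have "norm (f i k) = r ^ nat \<bar>k\<bar>" for k using r by (simp add: f_def norm_mult norm_power)
    ultimately show ?thesis by simp
  qed
  have eq: "(\<Prod>i\<in>Ms. f i (j i)) = of_real (cw r Ms j) * e (mu lam Ms j * x)" for j
  proof -
    have "(\<Prod>i\<in>Ms. f i (j i)) = (\<Prod>i\<in>Ms. of_real (r ^ nat \<bar>j i\<bar>)) * (\<Prod>i\<in>Ms. e (of_int (j i) * (lam i * x)))"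
      by (simp add: f_def prod.distrib)
    also have "(\<Prod>i\<in>Ms. e (of_int (j i) * (lam i * x))) = e (\<Sum>i\<in>Ms. of_int (j i) * (lam i * x))"
      by (rule e_sum[OF Ms])
    also have "(\<Sum>i\<in>Ms. of_int (j i) * (lam i * x)) = mu lam Ms j * x"
      by (simp add: mu_def sum_distrib_left sum_distrib_right mult_ac)
    finally show ?thesis by (simp add: cw_def)
  qed
  have inf: "infsum (\<lambda>j. \<Prod>i\<in>Ms. f i (j i)) (JJ Ms) = (\<Prod>i\<in>Ms. infsum (f i) UNIV)"
    unfolding JJ_def by (rule infsum_prod_PiE_abs[OF Ms abs])
  also have "\<dots> = (\<Prod>i\<in>Ms. of_real (Qr r (lam i * x)))" by (rule prod.cong[OF refl], rule infsumI[OF fs])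
  also have "\<dots> = of_real (Pr r lam Ms x)" by (simp add: Pr_def)
  finally have inf2: "infsum (\<lambda>j. \<Prod>i\<in>Ms. f i (j i)) (JJ Ms) = of_real (Pr r lam Ms x)" .
  have "(\<lambda>j. \<Prod>i\<in>Ms. f i (j i)) summable_on (JJ Ms)"
  proof (rule ccontr)
    assume "\<not> ?thesis"
    hence "infsum (\<lambda>j. \<Prod>i\<in>Ms. f i (j i)) (JJ Ms) = 0" by (rule infsum_not_exists)
    thus False using inf2 Pr_pos[OF r, of lam Ms x] by simp
  qed
  hence "((\<lambda>j. \<Prod>i\<in>Ms. f i (j i)) has_sum of_real (Pr r lam Ms x)) (JJ Ms)"
    using inf2 by (simp add: has_sum_iff)
  thus ?thesis by (simp only: eq)
qed

lemma cw_has_sum: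
  assumes r: "0 \<le> r" "r < 1" and Ms: "finite Ms"
  shows "((\<lambda>j. cw r Ms j) has_sum ((1 + r) / (1 - r)) ^ card Ms) (JJ Ms)"
proof -
  from P_has_sum[OF r Ms, of "\<lambda>_. 0" 0]
  have "((\<lambda>j. of_real (cw r Ms j) :: complex) has_sum of_real (Pr r (\<lambda>_. 0) Ms 0)) (JJ Ms)" by simp
  hence "((\<lambda>j. cw r Ms j) has_sum (Pr r (\<lambda>_. 0) Ms 0)) (JJ Ms)" by (simp only: has_sum_of_real_iff)
  moreover have "Pr r (\<lambda>_. 0) Ms 0 = ((1 + r) / (1 - r)) ^ card Ms" using Qr_zero[OF r] by (simp add: Pr_def)
  ultimately show ?thesis by simp
qed

definition shiftm :: "nat \<Rightarrow> (nat \<Rightarrow> int) \<Rightarrow> (nat \<Rightarrow> int)" where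
  "shiftm m j = j(m := j m - 1)"

lemma shiftm_bij:
  assumes "m \<in> Ms" shows "bij_betw (shiftm m) (JJ Ms) (JJ Ms)"
proof (rule bij_betw_byWitness[of _ "\<lambda>j. j(m := j m + 1)"])
  show "shiftm m ` JJ Ms \<subseteq> JJ Ms" using assms by (auto simp: shiftm_def JJ_def PiE_def extensional_def)
  show "(\<lambda>j. j(m := j m + 1)) ` JJ Ms \<subseteq> JJ Ms" using assms by (auto simp: JJ_def PiE_def extensional_def)
qed (auto simp: shiftm_def)

lemma mu_shiftm:
  assumes "m \<in> Ms" "finite Ms"
  shows "mu lam Ms (shiftm m j) = mu lam Ms j - lam m"
proof -
  have rest: "(\<Sum>i\<in>Ms - {m}. of_int (shiftm m j i) * lam i) = (\<Sum>i\<in>Ms - {m}. of_int (j i) * lam i)"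
    by (intro sum.cong) (auto simp: shiftm_def)
  show ?thesis
    unfolding mu_def using assms
    by (simp add: sum.remove[OF assms(2,1)] rest shiftm_def algebra_simps)
qed

lemma cw_shiftm:
  assumes "m \<in> Ms" "finite Ms" "0 \<le> r" "r \<le> 1"
  shows "cw r Ms (shiftm m j) \<ge> r * cw r Ms j"
proof -
  define R where "R = (\<Prod>i\<in>Ms - {m}. r ^ nat \<bar>j i\<bar>)"
  have R0: "R \<ge> 0" unfolding R_def using assms by (intro prod_nonneg) auto
  have rest: "(\<Prod>i\<in>Ms - {m}. r ^ nat \<bar>shiftm m j i\<bar>) = R"
    unfolding R_def by (intro prod.cong) (auto simp: shiftm_def)
  have "cw r Ms (shiftm m j) = r ^ nat \<bar>shiftm m j m\<bar> * (\<Prod>i\<in>Ms - {m}. r ^ nat \<bar>shiftm m j i\<bar>)"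
    unfolding cw_def by (rule prod.remove[OF assms(2,1)])
  also have "\<dots> = r ^ nat \<bar>j m - 1\<bar> * R" by (simp only: rest) (simp add: shiftm_def)
  finally have c1: "cw r Ms (shiftm m j) = r ^ nat \<bar>j m - 1\<bar> * R" .
  have c2: "cw r Ms j = r ^ nat \<bar>j m\<bar> * R"
    unfolding cw_def R_def by (rule prod.remove[OF assms(2,1)])
  have "r * r ^ nat \<bar>j m\<bar> = r ^ (nat \<bar>j m\<bar> + 1)" by simp
  also have "\<dots> \<le> r ^ nat \<bar>j m - 1\<bar>" using assms by (intro power_decreasing) auto
  finally have "r * r ^ nat \<bar>j m\<bar> \<le> r ^ nat \<bar>j m - 1\<bar>" .
  hence "r * r ^ nat \<bar>j m\<bar> * R \<le> r ^ nat \<bar>j m - 1\<bar> * R" using R0 by (intro mult_right_mono)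
  thus ?thesis by (simp add: c1 c2 mult_ac)
qed

lemma has_sum_sum_fin:
  fixes f :: "'i \<Rightarrow> 'a \<Rightarrow> 'b::topological_comm_monoid_add"
  assumes "finite I" "\<And>i. i \<in> I \<Longrightarrow> (f i has_sum s i) A"
  shows "((\<lambda>x. \<Sum>i\<in>I. f i x) has_sum (\<Sum>i\<in>I. s i)) A"
  using assms by (induction I rule: finite_induct) (auto intro: has_sum_add)

lemma has_sum_diff:
  fixes f g :: "'a \<Rightarrow> 'b::topological_ab_group_add"
  assumes "(f has_sum a) A" "(g has_sum b) A"
  shows "((\<lambda>x. f x - g x) has_sum (a - b)) A"
proof -
  have "((\<lambda>x. - g x) has_sum (- b)) A" using assms(2) by (simp add: has_sum_uminus)
  from has_sum_add[OF assms(1) this] show ?thesis by simp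
qed

lemma Re_rot_bound:
  fixes \<beta> :: real and z :: complex
  shows "Re (exp (\<i> * of_real \<beta>) * z) \<ge> - norm z"
proof -
  have "- Re (exp (\<i> * of_real \<beta>) * z) \<le> norm (exp (\<i> * of_real \<beta>) * z)"
    by (metis abs_Re_le_cmod abs_le_iff)
  thus ?thesis by (simp add: norm_mult)
qed

context
  fixes \<beta> r \<delta> a c X Y :: real and lam :: "nat \<Rightarrow> real" and Ms :: "nat set"
  assumes r: "0 < r" "r < 1" and \<delta>: "0 < \<delta>" "\<delta> \<le> 1" and a: "0 < a" "a < 1"
    and tanA: "tan (a * pi / 2) = (cos \<beta> - \<delta>) / \<bar>sin \<beta>\<bar>" and sb: "sin \<beta> \<noteq> 0"
    and c: "0 < c" "c < 1" and Ms: "finite Ms"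
begin

lemma W_bounds:
  shows "Re (exp (\<i> * of_real \<beta>) * What a c Y X \<nu>) \<ge> - eta a c Y X"
    and "Re (exp (\<i> * of_real \<beta>) * What a c Y X \<nu>) \<ge> \<delta> * Re (What a c Y X \<nu>) - 2 * eta a c Y X"
    and "Re (What a c Y X \<nu>) \<ge> - eta a c Y X"
proof -
  define G where "G = of_real (c powr a) * (1 - of_real (1 - c) * e \<nu>) powr (- of_real a)"
  define W where "W = What a c Y X \<nu>"
  define \<eta> where "\<eta> = eta a c Y X"
  have err: "norm (G - W) \<le> \<eta>" unfolding G_def W_def \<eta>_def using trunc_err a c by simp
  have \<eta>0: "\<eta> \<ge> 0" unfolding \<eta>_def using eta_nonneg a c by simp
  have s1: "Re (exp (\<i> * of_real \<beta>) * G) \<ge> \<delta> * Re G" and s2: "Re G \<ge> 0"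
    unfolding G_def using Ghat_sector[OF c a tanA sb] by auto
  have "Re (exp (\<i> * of_real \<beta>) * (W - G)) \<ge> - norm (W - G)" by (rule Re_rot_bound)
  moreover have "norm (W - G) = norm (G - W)" by (rule norm_minus_commute)
  ultimately have d1: "Re (exp (\<i> * of_real \<beta>) * W) \<ge> Re (exp (\<i> * of_real \<beta>) * G) - \<eta>"
    using err by (simp add: algebra_simps)
  have d2: "Re W \<le> Re G + \<eta>"
  proof -
    have "Re (W - G) \<le> norm (W - G)" by (rule complex_Re_le_cmod)
    thus ?thesis using err by (simp add: norm_minus_commute)
  qed
  have d3: "Re W \<ge> Re G - \<eta>"
  proof -
    have "Re (G - W) \<le> norm (G - W)" by (rule complex_Re_le_cmod)
    thus ?thesis using err by simp
  qed
  show "Re (exp (\<i> * of_real \<beta>) * What a c Y X \<nu>) \<ge> - eta a c Y X"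
    using d1 s1 s2 \<delta> unfolding W_def \<eta>_def by (smt (verit) mult_nonneg_nonneg)
  have "\<delta> * Re W \<le> \<delta> * (Re G + \<eta>)" using d2 \<delta> by (intro mult_left_mono) auto
  also have "\<dots> \<le> \<delta> * Re G + \<eta>" using \<delta> \<eta>0 by (simp add: distrib_left mult_left_le_one_le)
  finally show "Re (exp (\<i> * of_real \<beta>) * What a c Y X \<nu>) \<ge> \<delta> * Re (What a c Y X \<nu>) - 2 * eta a c Y X"
    using d1 s1 unfolding W_def \<eta>_def by linarith
  show "Re (What a c Y X \<nu>) \<ge> - eta a c Y X" using d3 s2 unfolding W_def \<eta>_def by linarith
qed

lemma W0: "Re (What a c Y X 0) = 1 - eta a c Y X"
  by (simp add: What_def eta_def)

definition VV :: "real \<Rightarrow> complex" where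
  "VV \<nu>0 = (\<Sum>k\<in>Sset Y X. of_real (pw a c k) * e (\<nu>0 * real k) * of_real (Pr r lam Ms (real k)))"

lemma VV_has_sum:
  "((\<lambda>j. of_real (cw r Ms j) * What a c Y X (\<nu>0 + mu lam Ms j)) has_sum VV \<nu>0) (JJ Ms)"
proof -
  have 1: "((\<lambda>j. of_real (pw a c k) * e (\<nu>0 * real k) * (of_real (cw r Ms j) * e (mu lam Ms j * real k)))
            has_sum (of_real (pw a c k) * e (\<nu>0 * real k) * of_real (Pr r lam Ms (real k)))) (JJ Ms)" for k
    using r Ms by (intro has_sum_cmult_right P_has_sum) auto
  have 2: "((\<lambda>j. \<Sum>k\<in>Sset Y X. of_real (pw a c k) * e (\<nu>0 * real k) * (of_real (cw r Ms j) * e (mu lam Ms j * real k)))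
            has_sum VV \<nu>0) (JJ Ms)"
    unfolding VV_def by (rule has_sum_sum_fin[OF finite_Sset 1])
  have 3: "(\<Sum>k\<in>Sset Y X. of_real (pw a c k) * e (\<nu>0 * real k) * (of_real (cw r Ms j) * e (mu lam Ms j * real k)))
           = of_real (cw r Ms j) * What a c Y X (\<nu>0 + mu lam Ms j)" for j
  proof -
    have "of_real (pw a c k) * e (\<nu>0 * real k) * (of_real (cw r Ms j) * e (mu lam Ms j * real k))
          = of_real (cw r Ms j) * (of_real (pw a c k) * e ((\<nu>0 + mu lam Ms j) * real k))" for k
    proof -
      have ee: "e (\<nu>0 * real k) * e (mu lam Ms j * real k) = e ((\<nu>0 + mu lam Ms j) * real k)"
        by (simp only: e_add[symmetric] distrib_right)
      have "of_real (pw a c k) * e (\<nu>0 * real k) * (of_real (cw r Ms j) * e (mu lam Ms j * real k))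
          = of_real (cw r Ms j) * (of_real (pw a c k) * (e (\<nu>0 * real k) * e (mu lam Ms j * real k)))"
        by (simp only: mult_ac)
      thus ?thesis by (simp only: ee)
    qed
    hence "(\<Sum>k\<in>Sset Y X. of_real (pw a c k) * e (\<nu>0 * real k) * (of_real (cw r Ms j) * e (mu lam Ms j * real k)))
          = (\<Sum>k\<in>Sset Y X. of_real (cw r Ms j) * (of_real (pw a c k) * e ((\<nu>0 + mu lam Ms j) * real k)))"
      by (intro sum.cong refl)
    also have "\<dots> = of_real (cw r Ms j) * What a c Y X (\<nu>0 + mu lam Ms j)"
      by (simp only: What_def sum_distrib_left)
    finally show ?thesis .
  qed
  show ?thesis using 2 by (simp only: 3)
qed

lemma DD_has_sum:
  "((\<lambda>j. cw r Ms j * Re (exp (\<i> * of_real \<beta>) * What a c Y X (\<nu>0 + mu lam Ms j)))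
     has_sum Re (exp (\<i> * of_real \<beta>) * VV \<nu>0)) (JJ Ms)"
proof -
  have "((\<lambda>j. Re (exp (\<i> * of_real \<beta>) * (of_real (cw r Ms j) * What a c Y X (\<nu>0 + mu lam Ms j))))
     has_sum Re (exp (\<i> * of_real \<beta>) * VV \<nu>0)) (JJ Ms)"
    by (intro has_sum_Re has_sum_cmult_right VV_has_sum)
  moreover have "Re (exp (\<i> * of_real \<beta>) * (of_real (cw r Ms j) * z)) = cw r Ms j * Re (exp (\<i> * of_real \<beta>) * z)" for j z
    by (simp add: mult.left_commute[of "exp _"])
  ultimately show ?thesis by simp
qed

lemma LL_has_sum:
  "((\<lambda>j. cw r Ms j * Re (What a c Y X (mu lam Ms j)))
     has_sum (\<Sum>k\<in>Sset Y X. pw a c k * Pr r lam Ms (real k))) (JJ Ms)"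
proof -
  have "((\<lambda>j. Re (of_real (cw r Ms j) * What a c Y X (0 + mu lam Ms j))) has_sum Re (VV 0)) (JJ Ms)"
    by (intro has_sum_Re VV_has_sum)
  moreover have "Re (VV 0) = (\<Sum>k\<in>Sset Y X. pw a c k * Pr r lam Ms (real k))"
    by (simp add: VV_def)
  ultimately show ?thesis by simp
qed

abbreviation "KM \<equiv> ((1 + r) / (1 - r)) ^ card Ms"

lemma DD_lower:
  "Re (exp (\<i> * of_real \<beta>) * VV \<nu>0) \<ge> - eta a c Y X * KM"
proof -
  have "((\<lambda>j. cw r Ms j * (- eta a c Y X)) has_sum (KM * (- eta a c Y X))) (JJ Ms)"
    using cw_has_sum[of r Ms] r Ms by (intro has_sum_cmult_left) auto
  moreover have "cw r Ms j * (- eta a c Y X) \<le> cw r Ms j * Re (exp (\<i> * of_real \<beta>) * What a c Y X (\<nu>0 + mu lam Ms j))" for j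
    using W_bounds(1) cw_nonneg[of r Ms j] r by (intro mult_left_mono) auto
  ultimately have "KM * (- eta a c Y X) \<le> Re (exp (\<i> * of_real \<beta>) * VV \<nu>0)"
    by (rule has_sum_mono[OF _ DD_has_sum])
  thus ?thesis by (simp add: mult.commute)
qed

lemma LL_lower:
  "(\<Sum>k\<in>Sset Y X. pw a c k * Pr r lam Ms (real k)) \<ge> 1 - eta a c Y X * KM"
proof -
  define \<eta> where "\<eta> = eta a c Y X"
  define \<Lambda> where "\<Lambda> = (\<Sum>k\<in>Sset Y X. pw a c k * Pr r lam Ms (real k))"
  define j0 :: "nat \<Rightarrow> int" where "j0 = (\<lambda>i. if i \<in> Ms then 0 else undefined)"
  have j0: "j0 \<in> JJ Ms" by (simp add: j0_def JJ_def PiE_def extensional_def)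
  have cj0: "cw r Ms j0 = 1" by (simp add: cw_def j0_def)
  have mj0: "mu lam Ms j0 = 0" by (simp add: mu_def j0_def)
  have hs: "((\<lambda>j. cw r Ms j * Re (What a c Y X (mu lam Ms j)) + cw r Ms j * \<eta>) has_sum (\<Lambda> + KM * \<eta>)) (JJ Ms)"
    unfolding \<Lambda>_def using cw_has_sum[of r Ms] r Ms
    by (intro has_sum_add LL_has_sum has_sum_cmult_left) auto
  have nn: "cw r Ms j * Re (What a c Y X (mu lam Ms j)) + cw r Ms j * \<eta> \<ge> 0" for j
  proof -
    have "cw r Ms j * (Re (What a c Y X (mu lam Ms j)) + \<eta>) \<ge> 0"
      using W_bounds(3)[of "mu lam Ms j"] cw_nonneg[of r Ms j] r by (intro mult_nonneg_nonneg) (auto simp: \<eta>_def)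
    thus ?thesis by (simp add: distrib_left)
  qed
  have "(\<Sum>j\<in>{j0}. cw r Ms j * Re (What a c Y X (mu lam Ms j)) + cw r Ms j * \<eta>) \<le> \<Lambda> + KM * \<eta>"
    using j0 nn by (intro finite_sum_le_has_sum[OF hs]) auto
  hence "1 \<le> \<Lambda> + KM * \<eta>" using W0 by (simp add: cj0 mj0 \<eta>_def)
  thus ?thesis by (simp add: \<Lambda>_def \<eta>_def mult.commute)
qed

lemma DD_shift:
  assumes m: "m \<in> Ms"
  shows "Re (exp (\<i> * of_real \<beta>) * VV (lam m))
           \<ge> r * \<delta> * (\<Sum>k\<in>Sset Y X. pw a c k * Pr r lam Ms (real k)) - 2 * eta a c Y X * KM"
proof -
  define \<eta> where "\<eta> = eta a c Y X"
  define \<Lambda> where "\<Lambda> = (\<Sum>k\<in>Sset Y X. pw a c k * Pr r lam Ms (real k))"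
  define \<Phi> where "\<Phi> \<nu> = Re (exp (\<i> * of_real \<beta>) * What a c Y X \<nu>)" for \<nu>
  define \<Psi> where "\<Psi> \<nu> = Re (What a c Y X \<nu>)" for \<nu>
  define D where "D = Re (exp (\<i> * of_real \<beta>) * VV (lam m))"
  define s where "s = shiftm m"
  have bij: "bij_betw s (JJ Ms) (JJ Ms)" unfolding s_def by (rule shiftm_bij[OF m])
  have \<eta>0: "\<eta> \<ge> 0" unfolding \<eta>_def using eta_nonneg a c by simp
  have KM0: "KM \<ge> 0" using r by simp
  have hD: "((\<lambda>j. cw r Ms j * \<Phi> (lam m + mu lam Ms j)) has_sum D) (JJ Ms)"
    unfolding \<Phi>_def D_def by (rule DD_has_sum)
  hence "((\<lambda>j. cw r Ms (s j) * \<Phi> (lam m + mu lam Ms (s j))) has_sum D) (JJ Ms)"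
    using has_sum_reindex_bij_betw[OF bij, of "\<lambda>j. cw r Ms j * \<Phi> (lam m + mu lam Ms j)"] by simp
  moreover have "lam m + mu lam Ms (s j) = mu lam Ms j" for j
    unfolding s_def using mu_shiftm[OF m Ms] by simp
  ultimately have hD': "((\<lambda>j. cw r Ms (s j) * \<Phi> (mu lam Ms j)) has_sum D) (JJ Ms)" by simp
  have hc: "((\<lambda>j. cw r Ms j) has_sum KM) (JJ Ms)" using cw_has_sum[of r Ms] r Ms by auto
  have hcs: "((\<lambda>j. cw r Ms (s j)) has_sum KM) (JJ Ms)"
    using has_sum_reindex_bij_betw[OF bij, of "\<lambda>j. cw r Ms j"] hc by simp
  have hL: "((\<lambda>j. cw r Ms j * \<Psi> (mu lam Ms j)) has_sum \<Lambda>) (JJ Ms)"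
    unfolding \<Psi>_def \<Lambda>_def by (rule LL_has_sum)
  have hlow: "((\<lambda>j. r * \<delta> * (cw r Ms j * \<Psi> (mu lam Ms j)) - r * \<eta> * cw r Ms j - \<eta> * cw r Ms (s j))
               has_sum (r * \<delta> * \<Lambda> - r * \<eta> * KM - \<eta> * KM)) (JJ Ms)"
    by (intro has_sum_diff has_sum_cmult_right hL hc hcs)
  have pt: "r * \<delta> * (cw r Ms j * \<Psi> (mu lam Ms j)) - r * \<eta> * cw r Ms j - \<eta> * cw r Ms (s j)
              \<le> cw r Ms (s j) * \<Phi> (mu lam Ms j)" for j
  proof -
    define p where "p = \<Phi> (mu lam Ms j) + \<eta>"
    have p0: "p \<ge> 0" unfolding p_def \<Phi>_def \<eta>_def using W_bounds(1)[of "mu lam Ms j"] by linarith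
    have pl: "p \<ge> \<delta> * \<Psi> (mu lam Ms j) - \<eta>" unfolding p_def \<Phi>_def \<Psi>_def \<eta>_def
      using W_bounds(2)[of "mu lam Ms j"] by linarith
    have cj: "cw r Ms (s j) \<ge> r * cw r Ms j" unfolding s_def using cw_shiftm[OF m Ms] r by simp
    have cj0: "cw r Ms j \<ge> 0" using cw_nonneg r by simp
    have "cw r Ms (s j) * p \<ge> (r * cw r Ms j) * p" using cj p0 by (intro mult_right_mono)
    moreover have "(r * cw r Ms j) * p \<ge> (r * cw r Ms j) * (\<delta> * \<Psi> (mu lam Ms j) - \<eta>)"
      using pl cj0 r by (intro mult_left_mono) auto
    ultimately have "cw r Ms (s j) * p \<ge> (r * cw r Ms j) * (\<delta> * \<Psi> (mu lam Ms j) - \<eta>)" by linarith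
    thus ?thesis unfolding p_def by (simp add: algebra_simps)
  qed
  have "r * \<delta> * \<Lambda> - r * \<eta> * KM - \<eta> * KM \<le> D"
    by (rule has_sum_mono[OF hlow hD' pt])
  moreover have "r * \<eta> \<le> \<eta>" using r \<eta>0 by (intro mult_left_le_one_le) auto
  hence "r * \<eta> * KM \<le> \<eta> * KM" using KM0 by (intro mult_right_mono) auto
  ultimately have "r * \<delta> * \<Lambda> - 2 * \<eta> * KM \<le> D" by linarith
  thus ?thesis by (simp add: D_def \<Lambda>_def \<eta>_def)
qed

context
  fixes f :: "nat \<Rightarrow> real"
  assumes fnn: "\<forall>n\<ge>1. 0 \<le> f n" and fsum: "summable (\<lambda>k. f (Suc k))" and Ms1: "Ms \<subseteq> {1..}"
begin

lemma TT_sums: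
  "(\<lambda>n. f (Suc n) * Re (exp (\<i> * of_real \<beta>) * VV (lam (Suc n)))) sums
     (\<Sum>k\<in>Sset Y X. pw a c k * Pr r lam Ms (real k) * Re (exp (\<i> * of_real \<beta>) * Fser f lam (real k)))"
proof -
  define u where "u k n = of_real (f (Suc n)) * e (lam (Suc n) * real k)" for k n :: nat
  have us: "u k sums Fser f lam (real k)" for k
  proof -
    have "summable (\<lambda>n. norm (u k n))" using fsum fnn by (simp add: u_def norm_mult)
    hence "summable (u k)" by (rule summable_norm_cancel)
    hence "u k sums suminf (u k)" by (rule summable_sums)
    moreover have "u k = (\<lambda>n. of_real (f (Suc n)) * e (lam (Suc n) * real k))" by (simp add: fun_eq_iff u_def)
    hence "suminf (u k) = Fser f lam (real k)" by (simp add: Fser_def)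
    ultimately show ?thesis by simp
  qed
  have 1: "(\<lambda>n. Re (exp (\<i> * of_real \<beta>) * (of_real (pw a c k * Pr r lam Ms (real k)) * u k n))) sums
           Re (exp (\<i> * of_real \<beta>) * (of_real (pw a c k * Pr r lam Ms (real k)) * Fser f lam (real k)))" for k
    by (intro sums_Re sums_mult us)
  have 2: "(\<lambda>n. \<Sum>k\<in>Sset Y X. Re (exp (\<i> * of_real \<beta>) * (of_real (pw a c k * Pr r lam Ms (real k)) * u k n))) sums
           (\<Sum>k\<in>Sset Y X. Re (exp (\<i> * of_real \<beta>) * (of_real (pw a c k * Pr r lam Ms (real k)) * Fser f lam (real k))))"
    by (rule sums_sum[OF 1])
  have 3: "Re (exp (\<i> * of_real \<beta>) * (of_real x * z)) = x * Re (exp (\<i> * of_real \<beta>) * z)" for x z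
    by (simp add: mult.left_commute[of "exp _"])
  have 4: "(\<Sum>k\<in>Sset Y X. Re (exp (\<i> * of_real \<beta>) * (of_real (pw a c k * Pr r lam Ms (real k)) * u k n)))
         = f (Suc n) * Re (exp (\<i> * of_real \<beta>) * VV (lam (Suc n)))" for n
  proof -
    have "(\<Sum>k\<in>Sset Y X. Re (exp (\<i> * of_real \<beta>) * (of_real (pw a c k * Pr r lam Ms (real k)) * u k n)))
        = (\<Sum>k\<in>Sset Y X. f (Suc n) * Re (exp (\<i> * of_real \<beta>) * (of_real (pw a c k) * e (lam (Suc n) * real k) * of_real (Pr r lam Ms (real k)))))"
    proof (intro sum.cong refl)
      fix k
      have "of_real (pw a c k * Pr r lam Ms (real k)) * u k n
            = of_real (f (Suc n)) * (of_real (pw a c k) * e (lam (Suc n) * real k) * of_real (Pr r lam Ms (real k)))"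
        by (simp add: u_def mult_ac)
      thus "Re (exp (\<i> * of_real \<beta>) * (of_real (pw a c k * Pr r lam Ms (real k)) * u k n))
          = f (Suc n) * Re (exp (\<i> * of_real \<beta>) * (of_real (pw a c k) * e (lam (Suc n) * real k) * of_real (Pr r lam Ms (real k))))"
        by (simp only: 3)
    qed
    also have "\<dots> = f (Suc n) * Re (exp (\<i> * of_real \<beta>) * VV (lam (Suc n)))"
      by (simp only: VV_def sum_distrib_left Re_sum)
    finally show ?thesis .
  qed
  have 5: "(\<Sum>k\<in>Sset Y X. Re (exp (\<i> * of_real \<beta>) * (of_real (pw a c k * Pr r lam Ms (real k)) * Fser f lam (real k))))
         = (\<Sum>k\<in>Sset Y X. pw a c k * Pr r lam Ms (real k) * Re (exp (\<i> * of_real \<beta>) * Fser f lam (real k)))"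
    by (simp only: 3)
  show ?thesis using 2 by (simp only: 4 5)
qed

lemma main_ineq:
  assumes T: "\<forall>x\<in>{Y..X}. Re (exp (\<i> * of_real \<beta>) * Fser f lam x) < T"
  shows "T * (\<Sum>k\<in>Sset Y X. pw a c k * Pr r lam Ms (real k))
          \<ge> r * \<delta> * (\<Sum>k\<in>Sset Y X. pw a c k * Pr r lam Ms (real k)) * (\<Sum>m\<in>Ms. f m)
             - 2 * eta a c Y X * KM * (\<Sum>n. f (Suc n))"
proof -
  define \<Lambda> where "\<Lambda> = (\<Sum>k\<in>Sset Y X. pw a c k * Pr r lam Ms (real k))"
  define \<eta> where "\<eta> = eta a c Y X"
  define TT where "TT = (\<Sum>k\<in>Sset Y X. pw a c k * Pr r lam Ms (real k) * Re (exp (\<i> * of_real \<beta>) * Fser f lam (real k)))"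
  define D where "D n = Re (exp (\<i> * of_real \<beta>) * VV (lam (Suc n)))" for n
  define Ms' where "Ms' = Suc -` Ms"
  have fMs': "finite Ms'" unfolding Ms'_def using Ms by (intro finite_vimageI) auto
  have SMs: "Suc ` Ms' = Ms"
  proof (intro equalityI subsetI)
    fix x assume "x \<in> Suc ` Ms'" thus "x \<in> Ms" by (auto simp: Ms'_def)
  next
    fix m assume m: "m \<in> Ms"
    hence "m \<ge> 1" using Ms1 by auto
    hence mm: "m = Suc (m - 1)" by simp
    hence "m - 1 \<in> Ms'" using m by (simp add: Ms'_def)
    with mm show "m \<in> Suc ` Ms'" by (rule image_eqI)
  qed
  have SM: "(\<Sum>n\<in>Ms'. f (Suc n)) = (\<Sum>m\<in>Ms. f m)"
    using sum.reindex[of Suc Ms' f] SMs by simp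
  have \<eta>0: "\<eta> \<ge> 0" unfolding \<eta>_def using eta_nonneg a c by simp
  have KM0: "KM \<ge> 0" using r by simp
  have up: "TT \<le> T * \<Lambda>"
  proof -
    have "TT \<le> (\<Sum>k\<in>Sset Y X. pw a c k * Pr r lam Ms (real k) * T)"
      unfolding TT_def
    proof (intro sum_mono mult_left_mono)
      fix k assume "k \<in> Sset Y X"
      hence "real k \<in> {Y..X}" by (simp add: Sset_def)
      thus "Re (exp (\<i> * of_real \<beta>) * Fser f lam (real k)) \<le> T" using T by (simp add: less_imp_le)
      show "0 \<le> pw a c k * Pr r lam Ms (real k)"
        using pw_nonneg[OF a(1) c(2)] Pr_pos[of r lam Ms] r by (intro mult_nonneg_nonneg) (auto simp: less_imp_le)
    qed
    also have "\<dots> = T * \<Lambda>" by (simp add: \<Lambda>_def sum_distrib_left mult_ac)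
    finally show ?thesis .
  qed
  have hTT: "(\<lambda>n. f (Suc n) * D n) sums TT" unfolding TT_def D_def by (rule TT_sums)
  define g where "g n = (if n \<in> Ms' then f (Suc n) else 0) * (r * \<delta> * \<Lambda>) - f (Suc n) * (2 * \<eta> * KM)" for n
  have hg: "g sums ((\<Sum>m\<in>Ms. f m) * (r * \<delta> * \<Lambda>) - (\<Sum>n. f (Suc n)) * (2 * \<eta> * KM))"
    unfolding g_def
    by (intro sums_diff sums_mult2) (auto simp: SM[symmetric] sums_If_finite_set[OF fMs'] summable_sums fsum)
  have pt: "g n \<le> f (Suc n) * D n" for n
  proof -
    have lb: "D n \<ge> (if n \<in> Ms' then r * \<delta> * \<Lambda> else 0) - 2 * \<eta> * KM"
    proof (cases "n \<in> Ms'")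
      case True
      hence "Suc n \<in> Ms" by (simp add: Ms'_def)
      from DD_shift[OF this] show ?thesis using True by (simp add: D_def \<Lambda>_def \<eta>_def)
    next
      case False
      have "D n \<ge> - \<eta> * KM" unfolding D_def \<eta>_def by (rule DD_lower)
      moreover have "\<eta> * KM \<ge> 0" using \<eta>0 KM0 by simp
      ultimately show ?thesis using False by simp
    qed
    have "f (Suc n) \<ge> 0" using fnn by simp
    hence "f (Suc n) * ((if n \<in> Ms' then r * \<delta> * \<Lambda> else 0) - 2 * \<eta> * KM) \<le> f (Suc n) * D n"
      using lb by (intro mult_left_mono) auto
    moreover have "g n = f (Suc n) * ((if n \<in> Ms' then r * \<delta> * \<Lambda> else 0) - 2 * \<eta> * KM)"
      by (cases "n \<in> Ms'") (simp_all add: g_def algebra_simps)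
    ultimately show ?thesis by simp
  qed
  have "(\<Sum>m\<in>Ms. f m) * (r * \<delta> * \<Lambda>) - (\<Sum>n. f (Suc n)) * (2 * \<eta> * KM) \<le> TT"
    by (rule sums_le[OF pt hg hTT])
  with up show ?thesis by (simp add: \<Lambda>_def \<eta>_def algebra_simps)
qed

end

end

lemma SM_reindex:
  assumes "finite Ms" "Ms \<subseteq> {1..}"
  shows "finite (Suc -` Ms)" and "(\<Sum>n\<in>Suc -` Ms. f (Suc n)) = (\<Sum>m\<in>Ms. f m)"
proof -
  show "finite (Suc -` Ms)" using assms by (intro finite_vimageI) auto
  have SMs: "Suc ` (Suc -` Ms) = Ms"
  proof (intro equalityI subsetI)
    fix x assume "x \<in> Suc ` (Suc -` Ms)" thus "x \<in> Ms" by auto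
  next
    fix m assume m: "m \<in> Ms"
    hence "m \<ge> 1" using assms by auto
    hence mm: "m = Suc (m - 1)" by simp
    hence "m - 1 \<in> Suc -` Ms" using m by simp
    with mm show "m \<in> Suc ` (Suc -` Ms)" by (rule image_eqI)
  qed
  show "(\<Sum>n\<in>Suc -` Ms. f (Suc n)) = (\<Sum>m\<in>Ms. f m)"
    using sum.reindex[of Suc "Suc -` Ms" f] SMs by simp
qed

theorem theorem1p2:
  fixes \<beta> r \<delta> :: real
  assumes "- (pi / 2) < \<beta>" and "\<beta> < pi / 2" and "\<beta> \<noteq> 0"
    and "0 < r" and "r < 1"
    and "0 < \<delta>" and "\<delta> < cos \<beta>"
  shows "\<exists>C>0. \<forall>(f :: nat \<Rightarrow> real) (lam :: nat \<Rightarrow> real) (Ms :: nat set) (X :: real) (Y :: real).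
           (\<forall>n\<ge>1. 0 \<le> f n) \<and> summable (\<lambda>k. f (Suc k)) \<and> (\<forall>n\<ge>1. 0 < lam n)
           \<and> finite Ms \<and> Ms \<subseteq> {1..} \<and> 3 < Y \<and> Y < X \<longrightarrow>
           (\<exists>x\<in>{Y..X}. Re (exp (\<i> * of_real \<beta>) * Fser f lam x)
              \<ge> \<delta> * r * (\<Sum>m\<in>Ms. f m)
                 - C * Re (Fser f lam 0) * ((1 + r) / (1 - r)) ^ card Ms
                     * (Y * ln X / X) powr ((2 / pi) * arctan ((cos \<beta> - \<delta>) / \<bar>sin \<beta>\<bar>)))"
proof -
  note b1 = assms(1) and b2 = assms(2) and b3 = assms(3) and r1 = assms(4) and r2 = assms(5)
    and d1 = assms(6) and d2 = assms(7)
  define q where "q = (cos \<beta> - \<delta>) / \<bar>sin \<beta>\<bar>"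
  define a where "a = (2 / pi) * arctan q"
  have sb: "sin \<beta> \<noteq> 0"
  proof (cases "\<beta> > 0")
    case True thus ?thesis using b2 by (intro order.strict_implies_not_eq[symmetric] sin_gt_zero) auto
  next
    case False
    hence "\<beta> < 0" using b3 by simp
    hence "sin (- \<beta>) > 0" using b1 by (intro sin_gt_zero) auto
    thus ?thesis by auto
  qed
  have cb: "cos \<beta> \<le> 1" by simp
  have q0: "q > 0" unfolding q_def using d2 sb by (intro divide_pos_pos) auto
  have a0: "0 < a" unfolding a_def using q0 by (simp add: zero_less_arctan_iff)
  have a1: "a < 1"
  proof -
    have "arctan q < pi / 2" by (rule arctan_ubound)
    thus ?thesis unfolding a_def by (simp add: field_simps)
  qed
  have tanA: "tan (a * pi / 2) = (cos \<beta> - \<delta>) / \<bar>sin \<beta>\<bar>"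
  proof -
    have "a * pi / 2 = arctan q" unfolding a_def by simp
    thus ?thesis by (simp add: tan_arctan q_def)
  qed
  have d3: "\<delta> \<le> 1" using d2 cb by linarith
  show ?thesis
  proof (intro exI[of _ 100] conjI allI impI)
    show "(0::real) < 100" by simp
    fix f lam :: "nat \<Rightarrow> real" and Ms :: "nat set" and X Y :: real
    assume H: "(\<forall>n\<ge>1. 0 \<le> f n) \<and> summable (\<lambda>k. f (Suc k)) \<and> (\<forall>n\<ge>1. 0 < lam n)
           \<and> finite Ms \<and> Ms \<subseteq> {1..} \<and> 3 < Y \<and> Y < X"
    hence fnn: "\<forall>n\<ge>1. 0 \<le> f n" and fsum: "summable (\<lambda>k. f (Suc k))" and Ms: "finite Ms"
      and Ms1: "Ms \<subseteq> {1..}" and Y: "3 < Y" and YX: "Y < X" by auto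
    define c where "c = ln X / X"
    have X3: "X > 3" using Y YX by simp
    have lnX1: "ln X \<ge> 1" using X3 exp_le by (subst ln_ge_iff) auto
    have c0: "0 < c" using lnX1 X3 by (simp add: c_def)
    have c1: "c < 1" using X3 by (simp add: c_def)
    define A where "A = (\<Sum>n. f (Suc n))"
    define SM where "SM = (\<Sum>m\<in>Ms. f m)"
    define KM where "KM = ((1 + r) / (1 - r)) ^ card Ms"
    define \<epsilon> where "\<epsilon> = (Y * ln X / X) powr a"
    define \<eta> where "\<eta> = eta a c Y X"
    define \<Lambda> where "\<Lambda> = (\<Sum>k\<in>Sset Y X. pw a c k * Pr r lam Ms (real k))"
    have fS: "0 \<le> f (Suc n)" for n using fnn by simp
    have A0: "A \<ge> 0" unfolding A_def using fsum fS by (intro suminf_nonneg) auto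
    have ReF0: "Re (Fser f lam 0) = A"
    proof -
      have "Fser f lam 0 = (\<Sum>k. of_real (f (Suc k)))" by (simp add: Fser_def)
      also have "\<dots> = of_real A" unfolding A_def using fsum by (rule suminf_of_real[symmetric])
      finally show ?thesis by simp
    qed
    have SMA: "SM \<le> A"
    proof -
      have "SM = (\<Sum>n\<in>Suc -` Ms. f (Suc n))" unfolding SM_def by (rule SM_reindex(2)[OF Ms Ms1, symmetric])
      also have "\<dots> \<le> A" unfolding A_def using fsum fS SM_reindex(1)[OF Ms Ms1]
        by (intro sum_le_suminf) auto
      finally show ?thesis .
    qed
    have SM0: "SM \<ge> 0" unfolding SM_def using fnn Ms1 by (intro sum_nonneg) auto
    have KM1: "KM \<ge> 1" unfolding KM_def using r1 r2 by (intro one_le_power) (simp add: field_simps)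
    have \<epsilon>0: "\<epsilon> > 0" unfolding \<epsilon>_def using Y YX lnX1 by simp
    have \<eta>\<epsilon>: "\<eta> \<le> 10 * \<epsilon>" unfolding \<eta>_def \<epsilon>_def c_def by (rule eta_bound[OF a0 a1 Y YX])
    have Rb: "Re (exp (\<i> * of_real \<beta>) * Fser f lam x) \<ge> - A" for x
    proof -
      have "summable (\<lambda>n. norm (of_real (f (Suc n)) * e (lam (Suc n) * x)))"
        using fsum fS by (simp add: norm_mult)
      hence "norm (Fser f lam x) \<le> (\<Sum>n. norm (of_real (f (Suc n)) * e (lam (Suc n) * x)))"
        unfolding Fser_def by (rule summable_norm)
      also have "\<dots> = A" using fS by (simp add: A_def norm_mult)
      moreover have "Re (exp (\<i> * of_real \<beta>) * Fser f lam x) \<ge> - norm (Fser f lam x)" by (rule Re_rot_bound)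
      ultimately show ?thesis by linarith
    qed
    define T where "T = \<delta> * r * SM - 100 * A * KM * \<epsilon>"
    have goalT: "(\<exists>x\<in>{Y..X}. Re (exp (\<i> * of_real \<beta>) * Fser f lam x) \<ge> T)"
    proof (cases "A = 0 \<or> \<eta> * KM \<ge> 1 / 2")
      case True
      have "T \<le> - A"
      proof (cases "A = 0")
        case True
        hence "SM = 0" using SMA SM0 by simp
        thus ?thesis using True by (simp add: T_def)
      next
        case False
        hence h: "\<eta> * KM \<ge> 1/2" using \<open>A = 0 \<or> \<eta> * KM \<ge> 1 / 2\<close> by simp
        have "\<eta> * KM \<le> 10 * \<epsilon> * KM" using \<eta>\<epsilon> KM1 by (intro mult_right_mono) auto
        hence "\<epsilon> * KM \<ge> 1 / 20" using h by simp
        hence "A * (\<epsilon> * KM) \<ge> A * (1 / 20)" using A0 by (intro mult_left_mono) auto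
        hence "100 * A * KM * \<epsilon> \<ge> 5 * A" by (simp add: algebra_simps)
        moreover have "\<delta> * r * SM \<le> SM"
        proof -
          have "\<delta> * r \<le> 1 * 1" using d1 d3 r1 r2 by (intro mult_mono) auto
          hence "\<delta> * r * SM \<le> 1 * SM" using SM0 by (intro mult_right_mono) auto
          thus ?thesis by simp
        qed
        ultimately show ?thesis using SMA A0 by (simp add: T_def)
      qed
      hence "Re (exp (\<i> * of_real \<beta>) * Fser f lam Y) \<ge> T" using Rb[of Y] by linarith
      thus ?thesis using YX by (intro bexI[of _ Y]) auto
    next
      case False
      hence Apos: "A > 0" and small: "\<eta> * KM < 1 / 2" using A0 by auto
      show ?thesis
      proof (rule ccontr)
        assume "\<not> ?thesis"
        hence lt: "\<forall>x\<in>{Y..X}. Re (exp (\<i> * of_real \<beta>) * Fser f lam x) < T" by auto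
        have MI: "T * \<Lambda> \<ge> r * \<delta> * \<Lambda> * SM - 2 * \<eta> * KM * A"
          unfolding \<Lambda>_def \<eta>_def KM_def SM_def A_def
          by (rule main_ineq[OF r1 r2 d1 d3 a0 a1 tanA sb c0 c1 Ms fnn fsum Ms1 lt])
        have LL: "\<Lambda> \<ge> 1 - \<eta> * KM"
          unfolding \<Lambda>_def \<eta>_def KM_def
          by (rule LL_lower[OF r1 r2 d1 d3 a0 a1 tanA sb c0 c1 Ms])
        hence L2: "\<Lambda> > 1 / 2" using small by linarith
        define P where "P = A * KM * \<epsilon>"
        have P0: "P > 0" unfolding P_def using Apos KM1 \<epsilon>0 by simp
        have "T * \<Lambda> = \<delta> * r * SM * \<Lambda> - 100 * P * \<Lambda>" by (simp add: T_def P_def algebra_simps)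
        hence "100 * P * \<Lambda> \<le> 2 * \<eta> * KM * A" using MI by (simp add: algebra_simps)
        also have "2 * \<eta> * KM * A \<le> 2 * (10 * \<epsilon>) * KM * A"
          using \<eta>\<epsilon> KM1 A0 by (intro mult_right_mono) auto
        also have "\<dots> = 20 * P" by (simp add: P_def algebra_simps)
        finally have "P * (100 * \<Lambda>) \<le> P * 20" by (simp add: algebra_simps)
        hence "100 * \<Lambda> \<le> 20" using P0 by simp
        thus False using L2 by simp
      qed
    qed
    show "\<exists>x\<in>{Y..X}. Re (exp (\<i> * of_real \<beta>) * Fser f lam x)
              \<ge> \<delta> * r * (\<Sum>m\<in>Ms. f m)
                 - 100 * Re (Fser f lam 0) * ((1 + r) / (1 - r)) ^ card Ms
                     * (Y * ln X / X) powr ((2 / pi) * arctan ((cos \<beta> - \<delta>) / \<bar>sin \<beta>\<bar>))"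
      using goalT by (simp add: T_def SM_def ReF0 KM_def \<epsilon>_def a_def q_def)
  qed
qed

end
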